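(* Let $m\le k\le n$ be positive integers and $\mathbf a_1,\dots,\mathbf a_n\in\mathbb R^m$, and let $w^*=\max\{[\det(\sum_{i\in S}\mathbf a_i\mathbf a_i^\top)]^{1/m}: S\subseteq[n],|S|=k\}$. Let $(\hat{\mathbf x},\hat w)$ be an optimal solution of the convex relaxation $$\max_{\mathbf x,w}\Big\{w:\ w\le \Big[\det\Big(\sum_{i\in[n]}x_i\mathbf a_i\mathbf a_i^\top\Big)\Big]^{1/m},\ \sum_{i\in[n]}x_i=k,\ \mathbf x\in[0,1]^n\Big\},$$ and let $\mathcal S$ be the random size-$k$ subset of $[n]$ (the output of the sampling algorithm) with $$\Pr[\mathcal S=S]=\frac{\prod_{j\in S}\hat x_j}{\sum_{\bar S\subseteq[n],|\bar S|=k}\prod_{i\in\bar S}\hat x_i}\quad\text{for every } S\subseteq[n],\ |S|=k.$$ Then this algorithm is a $\frac1e$-approximation, i.e. $$\Big\{\mathbb E\Big[\det\Big(\sum_{i\in\mathcal S}\mathbf a_i\mathbf a_i^\top\Big)\Big]\Big\}^{1/m}\ge \frac1e\,w^*.$$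
   Context: $[n]=\{1,\dots,n\}$. This is the $D$-optimal design problem without repetitions: choose $k$ of the $n$ distinct vectors to maximize the $m$-th root of the determinant of the sum of their outer products; $w^*$ is its optimal value. *)

theory Defs
  imports "HOL-Analysis.Analysis"
begin

definition outer :: "real ^ 'm \<Rightarrow> real ^ 'm ^ 'm" where
  "outer v = (\<chi> r c. v $ r * v $ c)"

definition info_mat :: "nat \<Rightarrow> (nat \<Rightarrow> real ^ 'm) \<Rightarrow> (nat \<Rightarrow> real) \<Rightarrow> real ^ 'm ^ 'm" where
  "info_mat n a x = (\<Sum>i\<in>{1..n}. x i *\<^sub>R outer (a i))"

definition subset_mat :: "(nat \<Rightarrow> real ^ 'm) \<Rightarrow> nat set \<Rightarrow> real ^ 'm ^ 'm" where
  "subset_mat a S = (\<Sum>i\<in>S. outer (a i))"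

definition ksubsets :: "nat \<Rightarrow> nat \<Rightarrow> nat set set" where
  "ksubsets n k = {S. S \<subseteq> {1..n} \<and> card S = k}"

definition w_star :: "nat \<Rightarrow> nat \<Rightarrow> (nat \<Rightarrow> real ^ 'm) \<Rightarrow> real" where
  "w_star n k a = Max ((\<lambda>S. root CARD('m) (det (subset_mat a S))) ` ksubsets n k)"

definition relax_feasible :: "nat \<Rightarrow> nat \<Rightarrow> (nat \<Rightarrow> real ^ 'm) \<Rightarrow> (nat \<Rightarrow> real) \<Rightarrow> real \<Rightarrow> bool" where
  "relax_feasible n k a x w \<longleftrightarrow>
     w \<le> root CARD('m) (det (info_mat n a x)) \<and>
     (\<Sum>i\<in>{1..n}. x i) = real k \<and>
     (\<forall>i\<in>{1..n}. 0 \<le> x i \<and> x i \<le> 1)"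

definition relax_optimal :: "nat \<Rightarrow> nat \<Rightarrow> (nat \<Rightarrow> real ^ 'm) \<Rightarrow> (nat \<Rightarrow> real) \<Rightarrow> real \<Rightarrow> bool" where
  "relax_optimal n k a x w \<longleftrightarrow> relax_feasible n k a x w \<and>
     (\<forall>x' w'. relax_feasible n k a x' w' \<longrightarrow> w' \<le> w)"

definition sample_prob :: "nat \<Rightarrow> nat \<Rightarrow> (nat \<Rightarrow> real) \<Rightarrow> nat set \<Rightarrow> real" where
  "sample_prob n k x S = (\<Prod>j\<in>S. x j) / (\<Sum>T\<in>ksubsets n k. \<Prod>i\<in>T. x i)"

definition expected_det :: "nat \<Rightarrow> nat \<Rightarrow> (nat \<Rightarrow> real ^ 'm) \<Rightarrow> (nat \<Rightarrow> real) \<Rightarrow> real" where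
  "expected_det n k a x = (\<Sum>S\<in>ksubsets n k. sample_prob n k x S * det (subset_mat a S))"

end

theory Submission
  imports Defs "HOL-Computational_Algebra.Polynomial"
begin


definition esy :: "(nat \<Rightarrow> real) \<Rightarrow> nat set \<Rightarrow> nat \<Rightarrow> real" where
  "esy x A l = (\<Sum>S\<in>{S. S \<subseteq> A \<and> card S = l}. prod x S)"

definition pp :: "(nat \<Rightarrow> real) \<Rightarrow> nat set \<Rightarrow> real poly" where
  "pp x A = (\<Prod>i\<in>A. [:1, x i:])"

lemma ks_finite: "finite A \<Longrightarrow> finite {S. S \<subseteq> A \<and> card S = l}"
  by (rule finite_subset[of _ "Pow A"]) auto

lemma esy_0: "finite A \<Longrightarrow> esy x A 0 = 1"
proof -
  assume f: "finite A"
  have "{S. S \<subseteq> A \<and> card S = 0} = {{}}" using f by (auto dest: finite_subset)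
  then show ?thesis by (simp add: esy_def)
qed

lemma esy_empty_Suc: "esy x {} (Suc l) = 0"
  by (simp add: esy_def)

lemma ks_insert:
  assumes "finite A" "u \<notin> A"
  shows "{S. S \<subseteq> insert u A \<and> card S = Suc l} =
     {S. S \<subseteq> A \<and> card S = Suc l} \<union> insert u ` {S. S \<subseteq> A \<and> card S = l}"
proof (intro equalityI subsetI)
  fix S assume S: "S \<in> {S. S \<subseteq> insert u A \<and> card S = Suc l}"
  show "S \<in> {S. S \<subseteq> A \<and> card S = Suc l} \<union> insert u ` {S. S \<subseteq> A \<and> card S = l}"
  proof (cases "u \<in> S")
    case True
    have "S = insert u (S - {u})" using True by auto
    moreover have "S - {u} \<subseteq> A" using S by auto
    moreover have "card (S - {u}) = l" using S True assms(1)
      by (simp add: card_Diff_singleton_if finite_subset[of S "insert u A"])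
    ultimately show ?thesis by blast
  next
    case False
    then show ?thesis using S by auto
  qed
next
  fix S assume "S \<in> {S. S \<subseteq> A \<and> card S = Suc l} \<union> insert u ` {S. S \<subseteq> A \<and> card S = l}"
  then show "S \<in> {S. S \<subseteq> insert u A \<and> card S = Suc l}"
  proof
    assume "S \<in> {S. S \<subseteq> A \<and> card S = Suc l}" then show ?thesis by auto
  next
    assume "S \<in> insert u ` {S. S \<subseteq> A \<and> card S = l}"
    then obtain T where T: "T \<subseteq> A" "card T = l" "S = insert u T" by auto
    have "finite T" using T assms(1) finite_subset by blast
    moreover have "u \<notin> T" using T assms(2) by auto
    ultimately have "card S = Suc l" using T by simp
    moreover have "S \<subseteq> insert u A" using T by blast
    ultimately show ?thesis by simp
  qed
qed

lemma esy_insert_Suc: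
  assumes "finite A" "u \<notin> A"
  shows "esy x (insert u A) (Suc l) = esy x A (Suc l) + x u * esy x A l"
proof -
  let ?K1 = "{S. S \<subseteq> A \<and> card S = Suc l}"
  let ?K0 = "{S. S \<subseteq> A \<and> card S = l}"
  have d: "?K1 \<inter> insert u ` ?K0 = {}"
    using assms(2) by auto
  have inj: "inj_on (insert u) ?K0"
  proof (rule inj_onI)
    fix X Y assume "X \<in> ?K0" "Y \<in> ?K0" "insert u X = insert u Y"
    then have "u \<notin> X" "u \<notin> Y" "insert u X = insert u Y" using assms(2) by auto
    then show "X = Y" by (metis Diff_insert_absorb)
  qed
  have f1: "finite ?K1" by (rule ks_finite[OF assms(1)])
  have f0: "finite (insert u ` ?K0)" by (rule finite_imageI[OF ks_finite[OF assms(1)]])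
  have "esy x (insert u A) (Suc l) = (\<Sum>S\<in>?K1 \<union> insert u ` ?K0. prod x S)"
    unfolding esy_def ks_insert[OF assms] ..
  also have "\<dots> = (\<Sum>S\<in>?K1. prod x S) + (\<Sum>S\<in>insert u ` ?K0. prod x S)"
    by (rule sum.union_disjoint[OF f1 f0 d])
  also have "(\<Sum>S\<in>insert u ` ?K0. prod x S) = (\<Sum>S\<in>?K0. prod x (insert u S))"
    using sum.reindex[OF inj, of "prod x"] by (simp add: comp_def)
  also have "\<dots> = (\<Sum>S\<in>?K0. x u * prod x S)"
  proof (rule sum.cong[OF refl])
    fix S assume S: "S \<in> ?K0"
    then have "finite S" "u \<notin> S" using assms finite_subset by auto
    then show "prod x (insert u S) = x u * prod x S" by simp
  qed
  also have "\<dots> = x u * esy x A l" unfolding esy_def by (rule sum_distrib_left[symmetric])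
  finally show ?thesis unfolding esy_def .
qed

lemma coeff_lin_mult:
  "coeff ([:1, c:] * q) 0 = coeff q 0"
  "coeff ([:1, c:] * q) (Suc l) = coeff q (Suc l) + c * coeff (q::real poly) l"
  by (simp_all add: mult_pCons_left coeff_pCons)

lemma coeff_pp: "finite A \<Longrightarrow> coeff (pp x A) l = esy x A l"
proof (induction A arbitrary: l rule: finite_induct)
  case empty
  then show ?case
    by (cases l) (simp_all add: pp_def esy_0 esy_empty_Suc)
next
  case (insert u A)
  have pp: "pp x (insert u A) = [:1, x u:] * pp x A"
    using insert by (simp add: pp_def)
  show ?case
  proof (cases l)
    case 0 then show ?thesis using insert by (simp add: pp coeff_lin_mult esy_0)
  next
    case (Suc l') then show ?thesis using insert by (simp add: pp coeff_lin_mult esy_insert_Suc)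
  qed
qed

lemma esy_split:
  assumes "finite A" "R \<subseteq> A"
  shows "esy x A k = (\<Sum>j\<le>k. esy x R j * esy x (A - R) (k - j))"
proof -
  have "pp x A = pp x (A - R) * pp x R"
    unfolding pp_def by (rule prod.subset_diff[OF assms(2,1)])
  then have "pp x A = pp x R * pp x (A - R)" by (simp only: mult.commute)
  then have "coeff (pp x A) k = (\<Sum>j\<le>k. coeff (pp x R) j * coeff (pp x (A - R)) (k - j))"
    by (simp add: coeff_mult)
  then show ?thesis using assms by (simp add: coeff_pp finite_subset)
qed

lemma esy_nonneg:
  assumes "\<And>i. i \<in> A \<Longrightarrow> 0 \<le> x i"
  shows "0 \<le> esy x A l"
  unfolding esy_def
proof (intro sum_nonneg prod_nonneg)
  fix S i assume "S \<in> {S. S \<subseteq> A \<and> card S = l}" "i \<in> S"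
  then have "i \<in> A" by blast
  then show "0 \<le> x i" by (rule assms)
qed

lemma esy_big:
  assumes "finite A" "card A < l"
  shows "esy x A l = 0"
proof -
  have e: "{S. S \<subseteq> A \<and> card S = l} = {}"
  proof (rule ccontr)
    assume "{S. S \<subseteq> A \<and> card S = l} \<noteq> {}"
    then obtain S where "S \<subseteq> A" "card S = l" by blast
    then have "l \<le> card A" using card_mono[OF assms(1)] by metis
    then show False using assms(2) by simp
  qed
  show ?thesis unfolding esy_def e by simp
qed

lemma esy_1: "finite A \<Longrightarrow> esy x A 1 = sum x A"
proof (induction A rule: finite_induct)
  case empty then show ?case using esy_empty_Suc[of x 0] by simp
next
  case (insert u A)
  have "esy x (insert u A) (Suc 0) = esy x A (Suc 0) + x u * esy x A 0"
    by (rule esy_insert_Suc) (use insert in auto)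
  then show ?case using insert esy_0[OF insert(1), of x] by simp
qed

lemma esy_newton:
  assumes "finite A" "\<And>i. i \<in> A \<Longrightarrow> 0 \<le> x i"
  shows "real (Suc l) * esy x A (Suc l) \<le> esy x A 1 * esy x A l"
  using assms
proof (induction A arbitrary: l rule: finite_induct)
  case empty then show ?case by (simp add: esy_empty_Suc)
next
  case (insert u A)
  have xu: "0 \<le> x u" using insert by auto
  have nn: "\<And>j. 0 \<le> esy x A j" using insert by (intro esy_nonneg) auto
  show ?case
  proof (cases l)
    case 0 then show ?thesis using insert by (simp add: esy_0)
  next
    case (Suc l')
    have e1: "esy x (insert u A) 1 = esy x A 1 + x u"
      using esy_insert_Suc[OF insert(1,2), of x 0] insert by (simp add: esy_0)
    have IH1: "real (Suc l) * esy x A (Suc l) \<le> esy x A 1 * esy x A l"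
      using insert by auto
    have IH2: "real (Suc l') * esy x A (Suc l') \<le> esy x A 1 * esy x A l'"
      using insert by auto
    have h: "0 \<le> x u * (esy x A 1 * esy x A l' - real (Suc l') * esy x A (Suc l'))"
      using IH2 xu by simp
    have h2: "0 \<le> x u * x u * esy x A l'" using xu nn by simp
    have h3: "0 \<le> x u * esy x A (Suc l')" using xu nn by simp
    define E1 where "E1 = esy x A 1"
    define E0 where "E0 = esy x A l'"
    define E2 where "E2 = esy x A (Suc l')"
    define E3 where "E3 = esy x A (Suc (Suc l'))"
    have IH1': "real (Suc (Suc l')) * E3 \<le> E1 * E2" using IH1 unfolding Suc E1_def E2_def E3_def .
    have h': "0 \<le> x u * (E1 * E0 - real (Suc l') * E2)" using h unfolding E1_def E0_def E2_def .
    have h2': "0 \<le> x u * x u * E0" using h2 unfolding E0_def .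
    have key: "real (Suc (Suc l')) * (E3 + x u * E2) \<le> (E1 + x u) * (E2 + x u * E0)"
    proof -
      have "(E1 + x u) * (E2 + x u * E0) - real (Suc (Suc l')) * (E3 + x u * E2)
         = (E1 * E2 - real (Suc (Suc l')) * E3) + x u * (E1 * E0 - real (Suc l') * E2) + x u * x u * E0"
        by (simp add: algebra_simps)
      then show ?thesis using IH1' h' h2' by linarith
    qed
    show ?thesis
      unfolding e1 Suc esy_insert_Suc[OF insert(1,2)]
      using key unfolding E1_def E0_def E2_def E3_def .
  qed
qed

lemma esy_maclaurin:
  assumes "finite A" "\<And>i. i \<in> A \<Longrightarrow> 0 \<le> x i"
  shows "esy x A j \<le> (sum x A) ^ j / fact j"
proof (induction j)
  case 0 then show ?case using assms by (simp add: esy_0)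
next
  case (Suc j)
  have "real (Suc j) * esy x A (Suc j) \<le> sum x A * esy x A j"
    using esy_newton[OF assms, where l=j] esy_1[OF assms(1)] by simp
  also have "\<dots> \<le> sum x A * ((sum x A) ^ j / fact j)"
    using Suc assms by (intro mult_left_mono) (auto intro: sum_nonneg)
  finally have h: "real (Suc j) * esy x A (Suc j) \<le> sum x A * ((sum x A) ^ j / fact j)" .
  have "esy x A (Suc j) \<le> sum x A * ((sum x A) ^ j / fact j) / real (Suc j)"
    using h by (subst pos_le_divide_eq) (auto simp: mult.commute)
  also have "sum x A * ((sum x A) ^ j / fact j) / real (Suc j) = (sum x A) ^ Suc j / fact (Suc j)"
    by (simp add: fact_Suc)
  finally show ?case .
qed

lemma esy_shift:
  assumes "finite A" "\<And>i. i \<in> A \<Longrightarrow> 0 \<le> x i"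
  shows "esy x A (c + r) \<le> esy x A c * (\<Prod>i=1..r. sum x A / real (c + i))"
proof (induction r)
  case 0 then show ?case by simp
next
  case (Suc r)
  have s: "0 \<le> sum x A" using assms by (auto intro: sum_nonneg)
  have "real (Suc (c + r)) * esy x A (Suc (c + r)) \<le> sum x A * esy x A (c + r)"
    using esy_newton[OF assms, where l="c + r"] esy_1[OF assms(1)] by simp
  then have "esy x A (c + Suc r) \<le> sum x A / real (c + Suc r) * esy x A (c + r)"
    by (simp add: field_simps)
  also have "\<dots> \<le> sum x A / real (c + Suc r) * (esy x A c * (\<Prod>i=1..r. sum x A / real (c + i)))"
    using Suc s by (intro mult_left_mono) auto
  also have "\<dots> = esy x A c * (\<Prod>i=1..Suc r. sum x A / real (c + i))"
    by (simp add: prod.nat_ivl_Suc' algebra_simps)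
  finally show ?case .
qed

lemma exp_partial:
  assumes "0 \<le> (t::real)"
  shows "(\<Sum>j\<le>N. t ^ j / fact j) \<le> exp t"
proof -
  have "(\<lambda>n. t ^ n / fact n) sums exp t"
    using exp_converges[of t] by (simp add: divide_inverse mult.commute)
  then have "(\<Sum>j\<le>N. t ^ j / fact j) \<le> (\<Sum>n. t ^ n / fact n)"
    using assms by (intro sum_le_suminf) (auto simp: sums_summable)
  then show ?thesis using \<open>(\<lambda>n. t ^ n / fact n) sums exp t\<close> sums_unique by metis
qed

lemma pow_fact_le_exp: "0 \<le> (t::real) \<Longrightarrow> t ^ N / fact N \<le> exp t"
proof -
  assume t: "0 \<le> t"
  have "t ^ N / fact N \<le> (\<Sum>j\<le>N. t ^ j / fact j)"
    using t by (intro member_le_sum) auto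
  then show ?thesis using exp_partial[OF t, of N] by linarith
qed

lemma prod_ratio_le_exp:
  fixes a :: real and c :: nat
  assumes "0 \<le> a"
  shows "(\<Prod>i=1..r. (a + c) / real (c + i)) \<le> exp a"
proof -
  define N where "N = nat \<lfloor>a\<rfloor>"
  have N: "real N \<le> a" "a < real N + 1" using assms unfolding N_def by linarith+
  have "(\<Prod>i=1..r. (a + c) / real (c + i)) \<le> a ^ min r N / fact (min r N)" for r
  proof (induction r)
    case 0 then show ?case by simp
  next
    case (Suc r)
    have P: "(\<Prod>i=1..Suc r. (a + c) / real (c + i)) = (\<Prod>i=1..r. (a + c) / real (c + i)) * ((a + c) / real (c + Suc r))"
      by (simp add: prod.nat_ivl_Suc')
    have P0: "0 \<le> (\<Prod>i=1..r. (a + c) / real (c + i))" using assms by (intro prod_nonneg) auto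
    show ?case
    proof (cases "Suc r \<le> N")
      case True
      have ra: "real (Suc r) \<le> a" using True N by linarith
      have "real c * real (Suc r) \<le> real c * a" using ra by (rule mult_left_mono) simp
      then have cm: "(a + c) * real (Suc r) \<le> a * real (c + Suc r)" by (simp add: algebra_simps)
      have f: "(a + c) / real (c + Suc r) \<le> a / real (Suc r)"
        using cm by (simp add: divide_simps)
      have mr: "min (Suc r) N = Suc r" "min r N = r" using True by auto
      have "(\<Prod>i=1..Suc r. (a + c) / real (c + i)) \<le> a ^ r / fact r * (a / real (Suc r))"
        unfolding P using Suc mr f P0 assms
        by (intro mult_mono) (auto simp: field_simps)
      also have "\<dots> = a ^ Suc r / fact (Suc r)" by (simp add: field_simps)
      finally show ?thesis using mr by simp
    next
      case False
      have f: "(a + c) / real (c + Suc r) \<le> 1"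
        using False N assms by (simp add: field_simps)
      have mr: "min (Suc r) N = min r N" using False by auto
      have "(\<Prod>i=1..Suc r. (a + c) / real (c + i)) \<le> (\<Prod>i=1..r. (a + c) / real (c + i)) * 1"
        unfolding P using f P0 by (intro mult_left_mono) auto
      then show ?thesis using Suc mr by simp
    qed
  qed
  then show ?thesis using pow_fact_le_exp[OF assms] order_trans by blast
qed



lemma det_sum_rows:
  fixes g :: "'n::finite \<Rightarrow> 'b \<Rightarrow> real^'n"
  assumes "finite S"
  shows "det (\<chi> i. \<Sum>j\<in>S. g i j) = (\<Sum>f\<in>UNIV \<rightarrow>\<^sub>E S. det (\<chi> i. g i (f i)))"
proof -
  have P: "(\<Prod>i\<in>UNIV. (\<chi> i. \<Sum>j\<in>S. g i j) $ i $ p i) = (\<Sum>f\<in>UNIV \<rightarrow>\<^sub>E S. \<Prod>i\<in>UNIV. g i (f i) $ p i)" for p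
    by (simp add: sum_component prod_sum_PiE assms)
  have "det (\<chi> i. \<Sum>j\<in>S. g i j) = (\<Sum>p\<in>{p. p permutes UNIV}. of_int (sign p) * (\<Sum>f\<in>UNIV \<rightarrow>\<^sub>E S. \<Prod>i\<in>UNIV. g i (f i) $ p i))"
    unfolding det_def P ..
  also have "\<dots> = (\<Sum>p\<in>{p. p permutes UNIV}. \<Sum>f\<in>UNIV \<rightarrow>\<^sub>E S. of_int (sign p) * (\<Prod>i\<in>UNIV. g i (f i) $ p i))"
    by (simp add: sum_distrib_left)
  also have "\<dots> = (\<Sum>f\<in>UNIV \<rightarrow>\<^sub>E S. \<Sum>p\<in>{p. p permutes UNIV}. of_int (sign p) * (\<Prod>i\<in>UNIV. g i (f i) $ p i))"
    by (rule sum.swap)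
  also have "\<dots> = (\<Sum>f\<in>UNIV \<rightarrow>\<^sub>E S. det (\<chi> i. g i (f i)))"
    unfolding det_def by simp
  finally show ?thesis .
qed

lemma row_form:
  "(\<Sum>i\<in>S. c i *\<^sub>R outer (a i)) = (\<chi> r. \<Sum>i\<in>S. (c i * a i $ r) *s (a i :: real^'m))"
  by (simp add: vec_eq_iff outer_def sum_component algebra_simps)

definition hh :: "(nat \<Rightarrow> real ^ 'm) \<Rightarrow> ('m \<Rightarrow> nat) \<Rightarrow> real" where
  "hh a f = (\<Prod>r\<in>UNIV. a (f r) $ r) * det (\<chi> r. a (f r))"

lemma hexp:
  fixes a :: "nat \<Rightarrow> real^'m"
  assumes "finite S"
  shows "det (\<Sum>i\<in>S. c i *\<^sub>R outer (a i)) = (\<Sum>f\<in>UNIV \<rightarrow>\<^sub>E S. (\<Prod>r\<in>UNIV. c (f r)) * hh a f)"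
proof -
  have "det (\<Sum>i\<in>S. c i *\<^sub>R outer (a i)) = (\<Sum>f\<in>UNIV \<rightarrow>\<^sub>E S. det (\<chi> r. (c (f r) * a (f r) $ r) *s a (f r)))"
    unfolding row_form by (rule det_sum_rows[OF assms])
  also have "\<dots> = (\<Sum>f\<in>UNIV \<rightarrow>\<^sub>E S. (\<Prod>r\<in>UNIV. c (f r)) * hh a f)"
    by (simp add: det_rows_mul hh_def prod.distrib mult.assoc)
  finally show ?thesis .
qed

lemma hh_noninj: "\<not> inj f \<Longrightarrow> hh a f = 0"
proof -
  assume "\<not> inj f"
  then obtain i j where ij: "f i = f j" "i \<noteq> j" unfolding inj_def by blast
  have "row i (\<chi> r. a (f r)) = row j (\<chi> r. a (f r))" using ij by (simp add: row_def vec_eq_iff)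
  then have "det (\<chi> r. a (f r)) = 0" using det_identical_rows[OF ij(2)] by blast
  then show ?thesis by (simp add: hh_def)
qed

lemma hexp_inj:
  fixes a :: "nat \<Rightarrow> real^'m"
  assumes "finite S"
  shows "det (\<Sum>i\<in>S. c i *\<^sub>R outer (a i)) = (\<Sum>f\<in>{f::'m\<Rightarrow>nat. range f \<subseteq> S \<and> inj f}. (\<Prod>r\<in>UNIV. c (f r)) * hh a f)"
proof -
  have e: "{f::'m\<Rightarrow>nat. range f \<subseteq> S \<and> inj f} \<subseteq> UNIV \<rightarrow>\<^sub>E S" by auto
  have fP: "finite ((UNIV::'m set) \<rightarrow>\<^sub>E S)" by (rule finite_PiE) (simp_all add: assms)
  show ?thesis unfolding hexp[OF assms]
    by (rule sum.mono_neutral_right[OF fP e]) (auto simp: hh_noninj)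
qed

lemma fin_inj: "finite S \<Longrightarrow> finite {f::'m::finite\<Rightarrow>nat. range f \<subseteq> S \<and> inj f}"
  by (rule finite_subset[OF _ finite_PiE[of UNIV "\<lambda>_. S"]]) auto

lemma CB:
  fixes a :: "nat \<Rightarrow> real^'m"
  assumes "finite S"
  shows "det (\<Sum>i\<in>S. c i *\<^sub>R outer (a i)) =
    (\<Sum>R\<in>{R. R \<subseteq> S \<and> card R = CARD('m)}. prod c R * det (subset_mat a R))"
proof -
  let ?F = "{f::'m\<Rightarrow>nat. range f \<subseteq> S \<and> inj f}"
  let ?K = "{R. R \<subseteq> S \<and> card R = CARD('m)}"
  have fK: "finite ?K" by (rule finite_subset[of _ "Pow S"]) (use assms in auto)
  have img: "range ` ?F \<subseteq> ?K" by (auto simp: card_image)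
  have "det (\<Sum>i\<in>S. c i *\<^sub>R outer (a i)) = (\<Sum>f\<in>?F. (\<Prod>r\<in>UNIV. c (f r)) * hh a f)"
    by (rule hexp_inj[OF assms])
  also have "\<dots> = (\<Sum>R\<in>?K. \<Sum>f\<in>{f \<in> ?F. range f = R}. (\<Prod>r\<in>UNIV. c (f r)) * hh a f)"
    by (rule sum.group[OF fin_inj[OF assms] fK img, symmetric])
  also have "\<dots> = (\<Sum>R\<in>?K. prod c R * det (subset_mat a R))"
  proof (rule sum.cong[OF refl])
    fix R assume R: "R \<in> ?K"
    have fR: "finite R" using R assms finite_subset by blast
    have setEq: "{f \<in> ?F. range f = R} = {f::'m\<Rightarrow>nat. range f \<subseteq> R \<and> inj f}"
    proof (intro equalityI subsetI)
      fix f assume "f \<in> {f::'m\<Rightarrow>nat. range f \<subseteq> R \<and> inj f}"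
      then have f: "range f \<subseteq> R" "inj f" by auto
      have "card (range f) = card R" using f R by (simp add: card_image)
      then have "range f = R" using card_subset_eq[OF fR f(1)] by simp
      then show "f \<in> {f \<in> ?F. range f = R}" using f R by auto
    qed auto
    have "(\<Sum>f\<in>{f \<in> ?F. range f = R}. (\<Prod>r\<in>UNIV. c (f r)) * hh a f) =
          (\<Sum>f\<in>{f \<in> ?F. range f = R}. prod c R * hh a f)"
    proof (rule sum.cong[OF refl])
      fix f assume f: "f \<in> {f \<in> ?F. range f = R}"
      have "prod c (f ` UNIV) = prod (c \<circ> f) UNIV"
        by (rule prod.reindex) (use f in auto)
      then have "prod c (range f) = (\<Prod>r\<in>UNIV. c (f r))" by simp
      then show "(\<Prod>r\<in>UNIV. c (f r)) * hh a f = prod c R * hh a f" using f by simp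
    qed
    also have "\<dots> = prod c R * (\<Sum>f\<in>{f \<in> ?F. range f = R}. hh a f)"
      by (simp add: sum_distrib_left)
    also have "(\<Sum>f\<in>{f \<in> ?F. range f = R}. hh a f) = det (subset_mat a R)"
      using hexp_inj[OF fR, of "\<lambda>_. 1" a] unfolding setEq by (simp add: subset_mat_def)
    finally show "(\<Sum>f\<in>{f \<in> ?F. range f = R}. (\<Prod>r\<in>UNIV. c (f r)) * hh a f) = prod c R * det (subset_mat a R)" .
  qed
  finally show ?thesis .
qed

lemma psd_det:
  fixes a :: "nat \<Rightarrow> real^'m"
  assumes "finite R" "card R = CARD('m)"
  shows "0 \<le> det (subset_mat a R)"
proof -
  obtain s where s: "bij_betw s (UNIV::'m set) R"
    using finite_same_card_bij[of "UNIV::'m set" R] assms by auto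
  define B where "B = (\<chi> r. a (s r))"
  have "subset_mat a R = (\<Sum>r\<in>UNIV. outer (a (s r)))"
    unfolding subset_mat_def by (rule sum.reindex_bij_betw[OF s, symmetric])
  also have "\<dots> = transpose B ** B"
    by (simp add: vec_eq_iff B_def outer_def matrix_matrix_mult_def transpose_def sum_component)
  finally have "det (subset_mat a R) = det B * det B" by (simp add: det_mul)
  then show ?thesis by simp
qed



lemma esy_main_ineq:
  fixes x :: "nat \<Rightarrow> real"
  assumes fI: "finite I" and RI: "R \<subseteq> I" and cR: "card R = mm" and mk: "mm \<le> k"
    and x01: "\<And>i. i \<in> I \<Longrightarrow> 0 \<le> x i \<and> x i \<le> 1" and sk: "sum x I = real k"
  shows "esy x I k \<le> exp (real mm) * esy x (I - R) (k - mm)"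
proof -
  define B where "B = I - R"
  define t where "t = sum x R"
  have fR: "finite R" and fB: "finite B" using fI RI finite_subset B_def by auto
  have xR: "\<And>i. i \<in> R \<Longrightarrow> 0 \<le> x i" and xB: "\<And>i. i \<in> B \<Longrightarrow> 0 \<le> x i"
    using x01 RI B_def by auto
  have t0: "0 \<le> t" unfolding t_def using xR by (auto intro: sum_nonneg)
  have tm: "t \<le> real mm"
  proof -
    have "sum x R \<le> of_nat (card R) * 1" using x01 RI by (intro sum_bounded_above) auto
    then show ?thesis using cR t_def by simp
  qed
  have sB: "sum x B = real k - t"
    using sum.subset_diff[OF RI fI, of x] sk unfolding B_def t_def by simp
  define a where "a = real mm - t"
  define c where "c = k - mm"
  have a0: "0 \<le> a" using tm a_def by simp
  have sBac: "sum x B = a + real c" using sB mk unfolding a_def c_def by (simp add: of_nat_diff)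
  define C where "C = exp a * esy x B c"
  have C0: "0 \<le> C" unfolding C_def using xB by (simp add: esy_nonneg)
  have trm: "esy x R j * esy x B (k - j) \<le> t ^ j / fact j * C" if "j \<le> k" for j
  proof (cases "j \<le> mm")
    case True
    have kj: "k - j = c + (mm - j)" using True mk that unfolding c_def by simp
    have "esy x B (k - j) \<le> esy x B c * (\<Prod>i=1..mm - j. sum x B / real (c + i))"
      unfolding kj by (rule esy_shift[OF fB xB])
    also have "\<dots> \<le> esy x B c * exp a"
      unfolding sBac using prod_ratio_le_exp[OF a0, of c "mm - j"] xB
      by (intro mult_left_mono) (auto simp: esy_nonneg)
    finally have h1: "esy x B (k - j) \<le> C" unfolding C_def by (simp add: mult.commute)
    have h2: "esy x R j \<le> t ^ j / fact j" unfolding t_def by (rule esy_maclaurin[OF fR xR])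
    show ?thesis using h1 h2 by (intro mult_mono) (auto simp: esy_nonneg xR xB t0)
  next
    case False
    then have "esy x R j = 0" using esy_big[OF fR] cR by simp
    then show ?thesis using C0 t0 by simp
  qed
  have "esy x I k = (\<Sum>j\<le>k. esy x R j * esy x B (k - j))"
    unfolding B_def by (rule esy_split[OF fI RI])
  also have "\<dots> \<le> (\<Sum>j\<le>k. t ^ j / fact j * C)"
    by (rule sum_mono) (use trm in auto)
  also have "\<dots> = (\<Sum>j\<le>k. t ^ j / fact j) * C" by (simp add: sum_distrib_right)
  also have "\<dots> \<le> exp t * C" using exp_partial[OF t0, of k] C0 by (rule mult_right_mono)
  also have "\<dots> = exp (real mm) * esy x B c" unfolding C_def a_def by (simp add: exp_diff)
  finally show ?thesis unfolding B_def c_def .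
qed


theorem theorem1:
  fixes a :: "nat \<Rightarrow> real ^ 'm" and n k :: nat and xh :: "nat \<Rightarrow> real" and wh :: real
  assumes "CARD('m) \<le> k" and "k \<le> n"
    and "relax_optimal n k a xh wh"
  shows "root CARD('m) (expected_det n k a xh) \<ge> (1 / exp 1) * w_star n k a"
proof -
  define mm where "mm = CARD('m)"
  define I where "I = {1..n}"
  define K where "K = ksubsets n k"
  define KM where "KM = {R. R \<subseteq> I \<and> card R = mm}"
  define x where "x = xh"
  define Z where "Z = (\<Sum>S\<in>K. prod x S)"
  define D where "D = det (info_mat n a x)"
  define d where "d = (\<lambda>R. det (subset_mat a R))"
  have mm0: "0 < mm" unfolding mm_def by simp
  have mk: "mm \<le> k" using assms(1) mm_def by simp
  have fI: "finite I" unfolding I_def by simp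
  have feas: "relax_feasible n k a xh wh" and opt: "\<And>x' w'. relax_feasible n k a x' w' \<Longrightarrow> w' \<le> wh"
    using assms(3) unfolding relax_optimal_def by auto
  have whD: "wh \<le> root mm D" using feas unfolding relax_feasible_def D_def x_def mm_def by simp
  have sk: "sum x I = real k" using feas unfolding relax_feasible_def x_def I_def by simp
  have x01: "\<And>i. i \<in> I \<Longrightarrow> 0 \<le> x i \<and> x i \<le> 1" using feas unfolding relax_feasible_def x_def I_def by simp
  have K_def': "K = {S. S \<subseteq> I \<and> card S = k}" unfolding K_def ksubsets_def I_def ..
  have fK: "finite K" unfolding K_def' using fI by (rule ks_finite)
  have fKM: "finite KM" unfolding KM_def using fI by (rule ks_finite)
  have Zesy: "Z = esy x I k" unfolding Z_def K_def' esy_def ..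
  have dsub: "d S = (\<Sum>R\<in>{R. R \<subseteq> S \<and> card R = mm}. d R)" if "finite S" for S
  proof -
    have "d S = det (\<Sum>i\<in>S. (\<lambda>_. 1) i *\<^sub>R outer (a i))" unfolding d_def subset_mat_def by simp
    also have "\<dots> = (\<Sum>R\<in>{R. R \<subseteq> S \<and> card R = mm}. prod (\<lambda>_. 1) R * d R)"
      unfolding d_def mm_def by (rule CB[OF that])
    finally show ?thesis by simp
  qed
  have dR0: "0 \<le> d R" if "finite R" "card R = mm" for R
    unfolding d_def using psd_det[of R a] that mm_def by simp
  have d0: "0 \<le> d S" if "finite S" for S
  proof -
    have "0 \<le> (\<Sum>R\<in>{R. R \<subseteq> S \<and> card R = mm}. d R)"
      by (rule sum_nonneg) (use that dR0 finite_subset in blast)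
    then show ?thesis using dsub[OF that] by simp
  qed
  have Zpos: "0 < Z"
  proof -
    define P where "P = {i \<in> I. 0 < x i}"
    have fP: "finite P" using fI P_def by simp
    have "sum x I = sum x P"
      by (rule sum.mono_neutral_right[OF fI]) (use x01 in \<open>auto simp: P_def\<close>, use x01 in force)
    also have "\<dots> \<le> of_nat (card P) * 1" using x01 P_def by (intro sum_bounded_above) auto
    finally have "k \<le> card P" using sk by simp
    then obtain T where T: "T \<subseteq> P" "card T = k" using obtain_subset_with_card_n by metis
    have TK: "T \<in> K" using T P_def K_def' by auto
    have "0 < prod x T" using T P_def by (intro prod_pos) auto
    also have "prod x T \<le> Z" unfolding Z_def
    proof (rule member_le_sum[OF TK])
      fix S assume "S \<in> K - {T}"
      then have "S \<subseteq> I" using K_def' by auto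
      then show "0 \<le> prod x S" using x01 by (intro prod_nonneg) auto
    qed (rule fK)
    finally show ?thesis .
  qed
  have supsum: "(\<Sum>S\<in>{S \<in> K. R \<subseteq> S}. prod x S) = prod x R * esy x (I - R) (k - mm)" if R: "R \<in> KM" for R
  proof -
    have RI: "R \<subseteq> I" and cR: "card R = mm" using R KM_def by auto
    have fR: "finite R" using RI fI finite_subset by blast
    have "(\<Sum>S\<in>{S \<in> K. R \<subseteq> S}. prod x S) = (\<Sum>V\<in>{V. V \<subseteq> I - R \<and> card V = k - mm}. prod x R * prod x V)"
    proof (rule sum.reindex_bij_witness[where j="\<lambda>S. S - R" and i="\<lambda>V. R \<union> V"])
      fix S assume S: "S \<in> {S \<in> K. R \<subseteq> S}"
      then show "R \<union> (S - R) = S" by auto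
      have fS: "finite S" using S K_def' fI finite_subset by auto
      show "S - R \<in> {V. V \<subseteq> I - R \<and> card V = k - mm}"
        using S K_def' cR fR by (auto simp: card_Diff_subset)
      show "prod x R * prod x (S - R) = prod x S"
        using prod.subset_diff[of R S x] S fS by auto
    next
      fix V assume V: "V \<in> {V. V \<subseteq> I - R \<and> card V = k - mm}"
      then show "R \<union> V - R = V" by auto
      have fV: "finite V" using V fI finite_subset by blast
      have "card (R \<union> V) = card R + card V" using V fR fV by (intro card_Un_disjoint) auto
      then show "R \<union> V \<in> {S \<in> K. R \<subseteq> S}" using V K_def' cR mk RI by auto
    qed
    also have "\<dots> = prod x R * esy x (I - R) (k - mm)" unfolding esy_def by (simp add: sum_distrib_left)
    finally show ?thesis .
  qed
  have key: "exp (- real mm) * Z * prod x R \<le> (\<Sum>S\<in>{S \<in> K. R \<subseteq> S}. prod x S)" if R: "R \<in> KM" for R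
  proof -
    have RI: "R \<subseteq> I" and cR: "card R = mm" using R KM_def by auto
    have px: "0 \<le> prod x R" using x01 RI by (intro prod_nonneg) auto
    have "Z \<le> exp (real mm) * esy x (I - R) (k - mm)"
      unfolding Zesy by (rule esy_main_ineq[OF fI RI cR mk x01 sk])
    then have "exp (- real mm) * Z \<le> esy x (I - R) (k - mm)"
      by (simp add: exp_minus field_simps)
    then have "exp (- real mm) * Z * prod x R \<le> esy x (I - R) (k - mm) * prod x R"
      using px by (rule mult_right_mono)
    then show ?thesis using supsum[OF R] by (simp add: mult.commute)
  qed
  have num: "exp (- real mm) * Z * D \<le> (\<Sum>S\<in>K. prod x S * d S)"
  proof -
    have "(\<Sum>S\<in>K. prod x S * d S) = (\<Sum>S\<in>K. \<Sum>R\<in>{R \<in> KM. R \<subseteq> S}. prod x S * d R)"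
    proof (rule sum.cong[OF refl])
      fix S assume S: "S \<in> K"
      have fS: "finite S" using S K_def' fI finite_subset by auto
      have e: "{R. R \<subseteq> S \<and> card R = mm} = {R \<in> KM. R \<subseteq> S}" using S K_def' KM_def by auto
      show "prod x S * d S = (\<Sum>R\<in>{R \<in> KM. R \<subseteq> S}. prod x S * d R)"
        using dsub[OF fS] e by (simp add: sum_distrib_left)
    qed
    also have "\<dots> = (\<Sum>R\<in>KM. \<Sum>S | S \<in> K \<and> R \<subseteq> S. prod x S * d R)"
      by (rule sum.swap_restrict[OF fK fKM])
    also have "\<dots> = (\<Sum>R\<in>KM. d R * (\<Sum>S\<in>{S \<in> K. R \<subseteq> S}. prod x S))"
      by (simp add: sum_distrib_left sum_distrib_right mult.commute)
    finally have eq: "(\<Sum>S\<in>K. prod x S * d S) = (\<Sum>R\<in>KM. d R * (\<Sum>S\<in>{S \<in> K. R \<subseteq> S}. prod x S))" .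
    have "D = (\<Sum>R\<in>KM. prod x R * d R)"
      unfolding D_def info_mat_def d_def KM_def mm_def I_def[symmetric]
      by (rule CB[OF fI])
    then have "exp (- real mm) * Z * D = (\<Sum>R\<in>KM. d R * (exp (- real mm) * Z * prod x R))"
      by (simp add: sum_distrib_left algebra_simps)
    also have "\<dots> \<le> (\<Sum>R\<in>KM. d R * (\<Sum>S\<in>{S \<in> K. R \<subseteq> S}. prod x S))"
    proof (rule sum_mono)
      fix R assume R: "R \<in> KM"
      have "0 \<le> d R" using R KM_def fI finite_subset dR0 by blast
      then show "d R * (exp (- real mm) * Z * prod x R) \<le> d R * (\<Sum>S\<in>{S \<in> K. R \<subseteq> S}. prod x S)"
        by (rule mult_left_mono[OF key[OF R]])
    qed
    finally show ?thesis using eq by simp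
  qed
  have ED: "expected_det n k a xh = (\<Sum>S\<in>K. prod x S * d S) / Z"
    unfolding expected_det_def sample_prob_def K_def[symmetric] x_def[symmetric] Z_def[symmetric] d_def
    by (simp add: sum_divide_distrib)
  have ED2: "exp (- real mm) * D \<le> expected_det n k a xh"
    unfolding ED using num Zpos by (simp add: field_simps)
  have Kne: "K \<noteq> {}" proof -
    have "{1..k} \<in> K" using assms(2) K_def' I_def by auto
    then show ?thesis by auto
  qed
  obtain S0 where S0: "S0 \<in> K" "w_star n k a = root mm (d S0)"
  proof -
    have "w_star n k a \<in> (\<lambda>S. root CARD('m) (det (subset_mat a S))) ` K"
      unfolding w_star_def K_def[symmetric] using fK Kne by (intro Max_in) auto
    then show ?thesis using that unfolding d_def mm_def by auto
  qed
  have fS0: "finite S0" using S0 K_def' fI finite_subset by auto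
  have ws0: "0 \<le> w_star n k a" using S0 d0[OF fS0] by (simp add: real_root_ge_zero)
  have wsle: "w_star n k a \<le> wh"
  proof (rule opt)
    define y where "y = (\<lambda>i. if i \<in> S0 then 1 else (0::real))"
    have S0I: "S0 \<subseteq> I" "card S0 = k" using S0 K_def' by auto
    have im: "info_mat n a y = subset_mat a S0"
    proof -
      have "info_mat n a y = (\<Sum>i\<in>I. if i \<in> S0 then outer (a i) else 0)"
        unfolding info_mat_def y_def I_def[symmetric] by (rule sum.cong) auto
      also have "\<dots> = (\<Sum>i\<in>S0. outer (a i))"
        using S0I fI by (simp add: sum.If_cases Int_absorb1)
      finally show ?thesis unfolding subset_mat_def .
    qed
    have sy: "(\<Sum>i\<in>{1..n}. y i) = real k"
    proof -
      have "(\<Sum>i\<in>I. y i) = (\<Sum>i\<in>I. if i \<in> S0 then 1 else 0)" unfolding y_def ..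
      also have "\<dots> = real (card S0)" using S0I fI by (simp add: sum.If_cases Int_absorb1)
      finally show ?thesis using S0I I_def by simp
    qed
    show "relax_feasible n k a y (w_star n k a)"
      unfolding relax_feasible_def im using S0 sy by (auto simp: y_def d_def mm_def)
  qed
  have wh0: "0 \<le> wh" using ws0 wsle by simp
  have D0: "0 \<le> D" using real_root_le_iff[OF mm0, of 0 D] whD wh0 by simp
  have whpow: "wh ^ mm \<le> D"
  proof -
    have "wh ^ mm \<le> (root mm D) ^ mm" using whD wh0 by (rule power_mono)
    also have "\<dots> = D" using D0 mm0 by (simp add: real_root_pow_pos2)
    finally show ?thesis .
  qed
  have "(exp (- 1) * wh) ^ mm = exp (- real mm) * wh ^ mm"
    by (simp add: power_mult_distrib exp_of_nat_mult[symmetric])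
  also have "\<dots> \<le> exp (- real mm) * D" using whpow by simp
  also have "\<dots> \<le> expected_det n k a xh" by (rule ED2)
  finally have "(exp (- 1) * wh) ^ mm \<le> expected_det n k a xh" .
  then have "root mm ((exp (- 1) * wh) ^ mm) \<le> root mm (expected_det n k a xh)"
    using mm0 by (simp only: real_root_le_iff)
  moreover have "root mm ((exp (- 1) * wh) ^ mm) = exp (- 1) * wh"
    using mm0 wh0 by (intro real_root_power_cancel) auto
  ultimately have "exp (- 1) * wh \<le> root mm (expected_det n k a xh)" by simp
  moreover have "(1 / exp 1) * w_star n k a \<le> exp (- 1) * wh"
    using wsle by (simp add: exp_minus divide_inverse)
  ultimately show ?thesis unfolding mm_def by linarith
qed

end
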